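(* Let $n\ge1$. Every $n$-normal operator $T\in\mathcal{L}(\mathcal{H})$ with closed range is $n$-EP.
   Context: $\mathcal{H}$ is a Hilbert space, $\mathcal{L}(\mathcal{H})$ the bounded operators on it. $T$ is $n$-normal if $T^nT^*=T^*T^n$. For $T$ with closed range, $T^\dagger$ is its Moore–Penrose inverse (unique solution of $TT^\dagger T=T$, $T^\dagger TT^\dagger=T^\dagger$, $(T^\dagger T)^*=T^\dagger T$, $(TT^\dagger)^*=TT^\dagger$). $T$ is $n$-EP if $T$ has closed range and $T^nT^\dagger=T^\dagger T^n$. *)

theory Defs
  imports "HOL-Analysis.Analysis"
begin

text \<open>Complex Hilbert spaces: the library only provides real inner product spaces,
so we introduce a class of complete complex inner product spaces whose norm is
induced by the inner product (linear in the second argument, conjugate linear in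
the first).\<close>

class chilbert = banach +
  fixes cscale :: "complex \<Rightarrow> 'a \<Rightarrow> 'a"
    and cinner :: "'a \<Rightarrow> 'a \<Rightarrow> complex"
  assumes cscale_of_real: "cscale (complex_of_real r) x = scaleR r x"
    and cscale_add_right: "cscale a (x + y) = cscale a x + cscale a y"
    and cscale_add_left: "cscale (a + b) x = cscale a x + cscale b x"
    and cscale_mult: "cscale (a * b) x = cscale a (cscale b x)"
    and cinner_cnj: "cinner x y = cnj (cinner y x)"
    and cinner_add_left: "cinner (x + y) z = cinner x z + cinner y z"
    and cinner_cscale_left: "cinner (cscale a x) y = cnj a * cinner x y"
    and cinner_norm: "cinner x x = complex_of_real ((norm x)\<^sup>2)"

definition bounded_clinear :: "('a::chilbert \<Rightarrow> 'b::chilbert) \<Rightarrow> bool" where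
  "bounded_clinear T \<longleftrightarrow>
     (\<forall>x y. T (x + y) = T x + T y) \<and>
     (\<forall>a x. T (cscale a x) = cscale a (T x)) \<and>
     (\<exists>K. \<forall>x. norm (T x) \<le> norm x * K)"

definition adj :: "('a::chilbert \<Rightarrow> 'a) \<Rightarrow> ('a \<Rightarrow> 'a)" where
  "adj T = (THE S. \<forall>x y. cinner (T x) y = cinner x (S y))"

definition mp_inv :: "('a::chilbert \<Rightarrow> 'a) \<Rightarrow> ('a \<Rightarrow> 'a)" where
  "mp_inv T = (THE S. bounded_clinear S \<and> T \<circ> S \<circ> T = T \<and> S \<circ> T \<circ> S = S \<and>
                       adj (S \<circ> T) = S \<circ> T \<and> adj (T \<circ> S) = T \<circ> S)"

definition n_normal :: "nat \<Rightarrow> ('a::chilbert \<Rightarrow> 'a) \<Rightarrow> bool" where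
  "n_normal n T \<longleftrightarrow> (T ^^ n) \<circ> adj T = adj T \<circ> (T ^^ n)"

definition n_EP :: "nat \<Rightarrow> ('a::chilbert \<Rightarrow> 'a) \<Rightarrow> bool" where
  "n_EP n T \<longleftrightarrow> closed (range T) \<and> (T ^^ n) \<circ> mp_inv T = mp_inv T \<circ> (T ^^ n)"

end

theory Submission
  imports Defs "HOL-Analysis.Analysis"
begin

lemma cinner_add_right: "cinner x (y + z) = cinner x y + cinner x z"
  by (metis cinner_cnj cinner_add_left complex_cnj_add)

lemma cinner_cscale_right: "cinner x (cscale a y) = a * cinner x y"
  by (metis cinner_cnj cinner_cscale_left complex_cnj_mult complex_cnj_cnj)

lemma cinner_zero_left[simp]: "cinner 0 y = 0"
  by (metis add_cancel_right_right add_0 cinner_add_left)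

lemma cinner_zero_right[simp]: "cinner x 0 = 0"
  by (metis cinner_cnj cinner_zero_left complex_cnj_zero)

lemma cinner_minus_left: "cinner (- x) y = - cinner x y"
  by (metis add_eq_0_iff cinner_add_left cinner_zero_left neg_eq_iff_add_eq_0)

lemma cinner_minus_right: "cinner x (- y) = - cinner x y"
  by (metis add_eq_0_iff cinner_add_right cinner_zero_right neg_eq_iff_add_eq_0)

lemma cinner_diff_left: "cinner (x - y) z = cinner x z - cinner y z"
  by (metis diff_conv_add_uminus cinner_add_left cinner_minus_left)

lemma cinner_diff_right: "cinner x (y - z) = cinner x y - cinner x z"
  by (metis diff_conv_add_uminus cinner_add_right cinner_minus_right)

lemma cinner_self_eq_0: "cinner x x = 0 \<longleftrightarrow> x = 0"
  by (simp add: cinner_norm)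

lemma cinner_ext: assumes "\<And>x. cinner x a = cinner x b" shows "a = b"
proof -
  have "cinner (a - b) (a - b) = 0" using assms[of "a-b"] by (simp add: cinner_diff_right)
  thus ?thesis by (simp add: cinner_self_eq_0)
qed

lemma cinner_scaleR_left: "cinner (scaleR r x) y = of_real r * cinner x y"
  by (metis cinner_cscale_left cscale_of_real complex_cnj_complex_of_real)

lemma cinner_scaleR_right: "cinner x (scaleR r y) = of_real r * cinner x y"
  by (metis cinner_cscale_right cscale_of_real)

lemma cscale_zero_right[simp]: "cscale a 0 = 0"
  by (metis add_cancel_right_right cscale_add_right add_0)

lemma cscale_minus_right: "cscale a (- x) = - cscale a x"
  by (metis add_eq_0_iff cscale_add_right cscale_zero_right neg_eq_iff_add_eq_0)

lemma cscale_diff_right: "cscale a (x - y) = cscale a x - cscale a y"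
  by (metis cscale_add_right cscale_minus_right diff_conv_add_uminus)

lemma norm_sq_cinner: "(norm x)\<^sup>2 = Re (cinner x x)"
  by (simp add: cinner_norm)

lemma norm_add_sq: "(norm (x + y))\<^sup>2 = (norm x)\<^sup>2 + (norm y)\<^sup>2 + 2 * Re (cinner x y)"
proof -
  have "cinner y x = cnj (cinner x y)" by (rule cinner_cnj)
  hence "Re (cinner y x) = Re (cinner x y)" by simp
  thus ?thesis by (simp add: norm_sq_cinner cinner_add_left cinner_add_right)
qed

lemma norm_diff_sq: "(norm (x - y))\<^sup>2 = (norm x)\<^sup>2 + (norm y)\<^sup>2 - 2 * Re (cinner x y)"
  using norm_add_sq[of x "-y"] by (simp add: cinner_minus_right)

lemma pythag: "cinner x y = 0 \<Longrightarrow> (norm (x + y))\<^sup>2 = (norm x)\<^sup>2 + (norm y)\<^sup>2"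
  by (simp add: norm_add_sq)

lemma cinner_zero_sym: "cinner x y = 0 \<longleftrightarrow> cinner y x = 0"
  by (metis cinner_cnj complex_cnj_zero_iff)

lemma cauchy_schwarz: "cmod (cinner x y) \<le> norm x * norm y"
proof (cases "y = 0")
  case True thus ?thesis by simp
next
  case False
  define c where "c = cinner y x"
  define n where "n = (norm y)\<^sup>2"
  have n: "n > 0" using False by (simp add: n_def)
  define t where "t = c / of_real n"
  have cyy: "cinner y y = of_real n" by (simp add: n_def cinner_norm)
  have cxy: "cinner x y = cnj c" by (simp add: c_def cinner_cnj[of x y])
  have "cinner (x - cscale t y) (x - cscale t y)
      = cinner x x - t * cnj c - cnj t * c + cnj t * t * of_real n"
    by (simp add: cinner_diff_left cinner_diff_right cinner_cscale_left cinner_cscale_right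
        cxy cyy c_def algebra_simps)
  also have "\<dots> = cinner x x - c * cnj c / of_real n"
    using n by (simp add: t_def field_simps)
  finally have "0 \<le> Re (cinner x x - c * cnj c / of_real n)"
    by (metis norm_sq_cinner zero_le_power2)
  hence "(cmod c)\<^sup>2 / n \<le> (norm x)\<^sup>2"
    by (simp add: norm_sq_cinner complex_mult_cnj cmod_power2 del: of_real_power)
  hence "(cmod c)\<^sup>2 \<le> (norm x)\<^sup>2 * (norm y)\<^sup>2" using n by (simp add: n_def field_simps)
  hence "(cmod c)\<^sup>2 \<le> (norm x * norm y)\<^sup>2" by (simp add: power_mult_distrib)
  hence "cmod c \<le> norm x * norm y" by (rule power2_le_imp_le) simp
  thus ?thesis by (simp add: cxy)
qed

lemma norm_cscale: "norm (cscale a x) = cmod a * norm x"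
proof -
  have "(norm (cscale a x))\<^sup>2 = Re (cinner (cscale a x) (cscale a x))" by (rule norm_sq_cinner)
  also have "\<dots> = Re (cnj a * a * cinner x x)" by (simp only: cinner_cscale_left cinner_cscale_right ac_simps)
  also have "\<dots> = (cmod a)\<^sup>2 * (norm x)\<^sup>2"
  proof -
    have "cnj a * a = of_real ((cmod a)\<^sup>2)" by (metis complex_norm_square mult.commute)
    thus ?thesis by (simp add: cinner_norm del: of_real_power)
  qed
  finally show ?thesis
    by (metis norm_ge_zero power2_eq_imp_eq power_mult_distrib zero_le_mult_iff)
qed

lemma bcl_linear: assumes "bounded_clinear T" shows "bounded_linear T"
proof -
  from assms obtain K where add: "\<And>x y. T (x + y) = T x + T y"
    and sc: "\<And>a x. T (cscale a x) = cscale a (T x)" and b: "\<And>x. norm (T x) \<le> norm x * K"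
    unfolding bounded_clinear_def by blast
  show ?thesis
  proof
    show "T (x + y) = T x + T y" for x y by (rule add)
    show "T (scaleR r x) = scaleR r (T x)" for r x by (metis sc cscale_of_real)
    show "\<exists>K. \<forall>x. norm (T x) \<le> norm x * K" using b by blast
  qed
qed

lemma bcl_comp: "bounded_clinear S \<Longrightarrow> bounded_clinear T \<Longrightarrow> bounded_clinear (S \<circ> T)"
proof -
  assume s: "bounded_clinear S" and t: "bounded_clinear T"
  then obtain K1 K2 where b1: "\<And>x. norm (S x) \<le> norm x * K1" and b2: "\<And>x. norm (T x) \<le> norm x * K2"
    unfolding bounded_clinear_def by blast
  have b1': "norm (S x) \<le> norm x * max K1 0" for x
    using b1[of x] by (smt (verit) max.cobounded1 mult_left_mono norm_ge_zero)
  have "norm (S (T x)) \<le> norm x * (K2 * max K1 0)" for x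
  proof -
    have "norm (S (T x)) \<le> norm (T x) * max K1 0" by (rule b1')
    also have "\<dots> \<le> norm x * K2 * max K1 0" using b2 by (intro mult_right_mono) auto
    finally show ?thesis by (simp add: mult.assoc)
  qed
  thus ?thesis using s t unfolding bounded_clinear_def by auto
qed

lemma bcl_id: "bounded_clinear (id :: 'a::chilbert \<Rightarrow> 'a)"
  unfolding bounded_clinear_def by (auto intro!: exI[of _ 1])

lemma bcl_funpow: fixes T :: "'a::chilbert \<Rightarrow> 'a" shows "bounded_clinear T \<Longrightarrow> bounded_clinear (T ^^ n)"
proof (induction n)
  case 0
  have "T ^^ 0 = id" by (rule ext) simp
  thus ?case using bcl_id by metis
next
  case (Suc n)
  have "T ^^ Suc n = T \<circ> T ^^ n" by (rule ext) simp
  thus ?case using Suc bcl_comp by metis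
qed

lemma iter_solve:
  fixes T :: "'a::banach \<Rightarrow> 'b::real_normed_vector"
  assumes lin: "bounded_linear T"
    and h: "\<And>y. y \<in> range T \<Longrightarrow> \<exists>x. norm x \<le> C * norm y \<and> norm (y - T x) \<le> norm y / 2"
    and y: "y \<in> range T"
  shows "\<exists>x. T x = y \<and> norm x \<le> 2 * C * norm y"
proof (cases "y = 0")
  case True
  thus ?thesis using linear_0[OF bounded_linear.linear[OF lin]] by (intro exI[of _ 0]) simp
next
  case False
  have "\<forall>y\<in>range T. \<exists>x. norm x \<le> C * norm y \<and> norm (y - T x) \<le> norm y / 2" using h by blast
  then obtain g where g: "\<And>y. y \<in> range T \<Longrightarrow> norm (g y) \<le> C * norm y \<and> norm (y - T (g y)) \<le> norm y / 2"
    by metis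
  have C: "C \<ge> 0"
  proof -
    have "0 \<le> C * norm y" using g[OF y] by (meson norm_ge_zero order_trans)
    thus ?thesis using False by (simp add: zero_le_mult_iff)
  qed
  define ys where "ys = rec_nat y (\<lambda>_ z. z - T (g z))"
  have ys0: "ys 0 = y" by (simp add: ys_def)
  have ysS: "ys (Suc k) = ys k - T (g (ys k))" for k by (simp add: ys_def)
  have ysR: "ys k \<in> range T" for k
  proof (induction k)
    case 0 thus ?case using y ys0 by simp
  next
    case (Suc k)
    then obtain a where "ys k = T a" by blast
    hence "ys (Suc k) = T (a - g (ys k))"
      using ysS linear_diff[OF bounded_linear.linear[OF lin]] by simp
    thus ?case by blast
  qed
  have ysn: "norm (ys k) \<le> norm y * (1/2)^k" for k
  proof (induction k)
    case 0 thus ?case by (simp add: ys0)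
  next
    case (Suc k)
    have "norm (ys (Suc k)) \<le> norm (ys k) / 2" using g[OF ysR[of k]] ysS by simp
    also have "\<dots> \<le> norm y * (1/2)^k / 2" using Suc by simp
    finally show ?case by simp
  qed
  define xs where "xs k = g (ys k)" for k
  have xsn: "norm (xs k) \<le> C * norm y * (1/2)^k" for k
  proof -
    have "norm (xs k) \<le> C * norm (ys k)" using g[OF ysR[of k]] by (simp add: xs_def)
    also have "\<dots> \<le> C * (norm y * (1/2)^k)" using ysn C by (intro mult_left_mono) auto
    finally show ?thesis by (simp add: mult.assoc)
  qed
  have sg: "summable (\<lambda>k. C * norm y * (1/2::real)^k)"
    by (intro summable_mult summable_geometric) simp
  have sn: "summable (\<lambda>k. norm (xs k))"
    by (rule summable_comparison_test'[OF sg]) (use xsn in simp)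
  have sx: "summable xs" by (rule summable_norm_cancel[OF sn])
  define x where "x = suminf xs"
  have "norm x \<le> (\<Sum>k. norm (xs k))" unfolding x_def by (rule summable_norm[OF sn])
  also have "\<dots> \<le> (\<Sum>k. C * norm y * (1/2::real)^k)"
    by (rule suminf_le[OF _ sn sg]) (use xsn in simp)
  also have "\<dots> = C * norm y * 2"
    by (simp add: suminf_mult suminf_geometric)
  finally have nx: "norm x \<le> 2 * C * norm y" by simp
  have s1: "(\<lambda>k. T (xs k)) sums T x"
    unfolding x_def by (rule bounded_linear.sums[OF lin]) (use sx in \<open>simp add: summable_sums\<close>)
  have lim0: "ys \<longlonglongrightarrow> 0"
  proof (rule Lim_null_comparison)
    show "\<forall>\<^sub>F k in sequentially. norm (ys k) \<le> norm y * (1/2)^k" using ysn by simp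
    show "(\<lambda>k. norm y * (1/2::real)^k) \<longlonglongrightarrow> 0"
      by (intro tendsto_mult_right_zero LIMSEQ_power_zero) simp
  qed
  have s2: "(\<lambda>k. ys k - ys (Suc k)) sums (ys 0 - 0)" by (rule telescope_sums'[OF lim0])
  have "(\<lambda>k. ys k - ys (Suc k)) = (\<lambda>k. T (xs k))" by (rule ext) (simp add: ysS xs_def)
  hence "T x = y" using s1 s2 ys0 by (metis diff_zero sums_unique2)
  thus ?thesis using nx by blast
qed

lemma open_mapping_closed_range:
  fixes T :: "'a::banach \<Rightarrow> 'b::banach"
  assumes lin: "bounded_linear T" and cl: "closed (range T)"
  shows "\<exists>C. \<forall>y\<in>range T. \<exists>x. T x = y \<and> norm x \<le> C * norm y"
proof -
  have L: "linear T" using lin bounded_linear.linear by blast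
  define R where "R = range T"
  define F where "F k = R \<inter> closure (T ` cball 0 (real k))" for k :: nat
  have "\<exists>k. (top_of_set R) interior_of F k \<noteq> {}"
  proof (rule ccontr)
    assume "\<not> ?thesis"
    hence emp: "\<And>k. top_of_set R interior_of F k = {}" by simp
    have "top_of_set R interior_of \<Union>(range F) = {}"
    proof (rule Baire_category_alt)
      show "completely_metrizable_space (top_of_set R) \<or>
            locally_compact_space (top_of_set R) \<and> regular_space (top_of_set R)"
        using completely_metrizable_space_closedin[OF completely_metrizable_space_euclidean]
          closed_closedin cl R_def by blast
      show "countable (range F)" by simp
      show "closedin (top_of_set R) S \<and> top_of_set R interior_of S = {}" if "S \<in> range F" for S
        using that emp by (auto simp: F_def closedin_closed_Int)
    qed
    moreover have "\<Union>(range F) = R"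
    proof
      show "\<Union>(range F) \<subseteq> R" by (auto simp: F_def)
      show "R \<subseteq> \<Union>(range F)"
      proof
        fix z assume "z \<in> R"
        then obtain a where a: "z = T a" by (auto simp: R_def)
        obtain k :: nat where "norm a \<le> real k" using real_arch_simple by blast
        hence "z \<in> T ` cball 0 (real k)" using a by auto
        hence "z \<in> closure (T ` cball 0 (real k))" by (rule subsetD[OF closure_subset])
        hence "z \<in> F k" using \<open>z \<in> R\<close> by (simp add: F_def)
        thus "z \<in> \<Union>(range F)" by blast
      qed
    qed
    ultimately have "R = {}" by (metis interior_of_topspace topspace_euclidean_subtopology)
    thus False by (simp add: R_def)
  qed
  then obtain k y0 where "y0 \<in> top_of_set R interior_of F k" by blast
  then obtain U where U: "openin (top_of_set R) U" "y0 \<in> U" "U \<subseteq> F k"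
    by (auto simp: interior_of_def)
  then obtain e where e: "e > 0" "ball y0 e \<inter> R \<subseteq> U"
    by (auto simp: openin_contains_ball)
  have y0R: "y0 \<in> R" using U openin_subset by fastforce
  have closeF: "z \<in> closure (T ` cball 0 (real k))" if "z \<in> R" "dist y0 z < e" for z
    using that e U by (auto simp: F_def)
  have approx: "\<exists>x. norm x \<le> 2 * real k \<and> norm (y - T x) < \<epsilon>"
    if y: "y \<in> R" "norm y < e" and ep: "\<epsilon> > 0" for y \<epsilon>
  proof -
    obtain a b where ab: "y0 = T a" "y = T b" using y y0R by (auto simp: R_def)
    have "y0 + y = T (a + b)" using ab linear_add[OF L] by simp
    hence "y0 + y \<in> R" by (simp add: R_def)
    moreover have "dist y0 (y0 + y) < e" using y by (simp add: dist_norm)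
    ultimately have "y0 + y \<in> closure (T ` cball 0 (real k))" by (rule closeF)
    then obtain x1 where x1: "norm x1 \<le> real k" "dist (T x1) (y0 + y) < \<epsilon>/2"
    proof -
      have "\<epsilon>/2 > 0" using ep by simp
      with \<open>y0 + y \<in> closure _\<close> obtain z where "z \<in> T ` cball 0 (real k)" "dist z (y0 + y) < \<epsilon>/2"
        unfolding closure_approachable by blast
      thus ?thesis using that by auto
    qed
    have "y0 \<in> closure (T ` cball 0 (real k))" using y0R e by (intro closeF) auto
    then obtain x2 where x2: "norm x2 \<le> real k" "dist (T x2) y0 < \<epsilon>/2"
    proof -
      have "\<epsilon>/2 > 0" using ep by simp
      with \<open>y0 \<in> closure _\<close> obtain z where "z \<in> T ` cball 0 (real k)" "dist z y0 < \<epsilon>/2"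
        unfolding closure_approachable by blast
      thus ?thesis using that by auto
    qed
    have eq: "y - T (x1 - x2) = (y0 + y - T x1) - (y0 - T x2)"
      using linear_diff[OF L] by (simp add: algebra_simps)
    have "norm (y - T (x1 - x2)) \<le> norm (y0 + y - T x1) + norm (y0 - T x2)"
      unfolding eq by (rule norm_triangle_ineq4)
    also have "\<dots> < \<epsilon>" using x1 x2 by (simp add: dist_norm norm_minus_commute)
    finally have "norm (y - T (x1 - x2)) < \<epsilon>" .
    moreover have "norm (x1 - x2) \<le> 2 * real k"
      using norm_triangle_ineq4[of x1 x2] x1 x2 by simp
    ultimately show ?thesis by blast
  qed
  have half: "\<exists>x. norm x \<le> (4 * real k / e) * norm y \<and> norm (y - T x) \<le> norm y / 2"
    if y: "y \<in> range T" for y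
  proof (cases "y = 0")
    case True thus ?thesis using linear_0[OF L] by (intro exI[of _ 0]) simp
  next
    case False
    define ny where "ny = norm y"
    have ny: "ny > 0" using False by (simp add: ny_def)
    define s where "s = e / (2 * ny)"
    have s: "s > 0" using ny e by (simp add: s_def)
    obtain b where b: "y = T b" using y by blast
    have "s *\<^sub>R y = T (s *\<^sub>R b)" using b linear_scale[OF L] by simp
    hence yR: "s *\<^sub>R y \<in> R" by (simp add: R_def)
    have "norm (s *\<^sub>R y) = e / 2" using ny e by (simp add: s_def ny_def)
    hence "norm (s *\<^sub>R y) < e" using e by simp
    then obtain x' where x': "norm x' \<le> 2 * real k" "norm (s *\<^sub>R y - T x') < e / 4"
      using approx[OF yR] e by (metis divide_pos_pos zero_less_numeral)
    define x where "x = (1/s) *\<^sub>R x'"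
    have "norm x = (1/s) * norm x'" using s by (simp add: x_def)
    also have "\<dots> \<le> (1/s) * (2 * real k)" using x' s by (intro mult_left_mono) auto
    also have "\<dots> = (4 * real k / e) * norm y" using ny e by (simp add: s_def ny_def field_simps)
    finally have n1: "norm x \<le> (4 * real k / e) * norm y" .
    have "y - T x = (1/s) *\<^sub>R (s *\<^sub>R y - T x')"
      using s linear_scale[OF L] by (simp add: x_def algebra_simps)
    hence "norm (y - T x) = (1/s) * norm (s *\<^sub>R y - T x')" using s by simp
    also have "\<dots> \<le> (1/s) * (e / 4)" using x' s by (intro mult_left_mono) auto
    also have "\<dots> = norm y / 2" using ny e by (simp add: s_def ny_def field_simps)
    finally show ?thesis using n1 by blast
  qed
  show ?thesis
    using iter_solve[OF lin half] by blast
qed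

definition orth :: "'a::chilbert set \<Rightarrow> 'a \<Rightarrow> bool" where
  "orth M v \<longleftrightarrow> (\<forall>m\<in>M. cinner m v = 0)"

definition csub :: "'a::chilbert set \<Rightarrow> bool" where
  "csub M \<longleftrightarrow> 0 \<in> M \<and> (\<forall>x\<in>M. \<forall>y\<in>M. x + y \<in> M) \<and> (\<forall>a. \<forall>x\<in>M. cscale a x \<in> M)"

lemma csub_add: "csub M \<Longrightarrow> x \<in> M \<Longrightarrow> y \<in> M \<Longrightarrow> x + y \<in> M"
  by (simp add: csub_def)

lemma csub_cscale: "csub M \<Longrightarrow> x \<in> M \<Longrightarrow> cscale a x \<in> M"
  by (simp add: csub_def)

lemma csub_scaleR: "csub M \<Longrightarrow> x \<in> M \<Longrightarrow> scaleR r x \<in> M"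
  by (metis csub_cscale cscale_of_real)

lemma csub_diff: "csub M \<Longrightarrow> x \<in> M \<Longrightarrow> y \<in> M \<Longrightarrow> x - y \<in> M"
proof -
  assume M: "csub M" "x \<in> M" "y \<in> M"
  have "x - y = x + scaleR (-1) y" by simp
  thus ?thesis using M csub_add csub_scaleR by metis
qed

lemma orth_add: "orth M u \<Longrightarrow> orth M v \<Longrightarrow> orth M (u + v)"
  by (simp add: orth_def cinner_add_right)

lemma orth_diff: "orth M u \<Longrightarrow> orth M v \<Longrightarrow> orth M (u - v)"
  by (simp add: orth_def cinner_diff_right)

lemma orth_cscale: "orth M u \<Longrightarrow> orth M (cscale a u)"
  by (simp add: orth_def cinner_cscale_right)

lemma orth_zero: "orth M 0"
  by (simp add: orth_def)

lemma parallelogram: fixes u v :: "'a::chilbert" shows "(norm (u + v))\<^sup>2 + (norm (u - v))\<^sup>2 = 2 * (norm u)\<^sup>2 + 2 * (norm v)\<^sup>2"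
  by (simp add: norm_add_sq norm_diff_sq)

lemma proj_exists:
  fixes M :: "'a::chilbert set"
  assumes M: "csub M" and cl: "closed M"
  shows "\<exists>p\<in>M. orth M (x - p)"
proof -
  define D where "D = (\<lambda>m. norm (x - m)) ` M"
  define d where "d = Inf D"
  have D0: "D \<noteq> {}" using M by (auto simp: D_def csub_def)
  have Db: "bdd_below D" unfolding D_def by (rule bdd_belowI[of _ 0]) auto
  have dle: "d \<le> norm (x - m)" if "m \<in> M" for m
    unfolding d_def using Db that by (intro cInf_lower) (auto simp: D_def)
  have d0: "d \<ge> 0" unfolding d_def using D0 by (intro cInf_greatest) (auto simp: D_def)
  have "\<exists>m\<in>M. (norm (x - m))\<^sup>2 < d\<^sup>2 + inverse (real (Suc k))" for k
  proof -
    have "d\<^sup>2 < d\<^sup>2 + inverse (real (Suc k))" by simp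
    hence "d < sqrt (d\<^sup>2 + inverse (real (Suc k)))" by (rule real_less_rsqrt)
    hence "Inf D < sqrt (d\<^sup>2 + inverse (real (Suc k)))" by (simp add: d_def)
    then obtain m where m: "m \<in> M" "norm (x - m) < sqrt (d\<^sup>2 + inverse (real (Suc k)))"
      using cInf_less_iff[OF D0 Db] by (auto simp: D_def)
    hence "(norm (x - m))\<^sup>2 < (sqrt (d\<^sup>2 + inverse (real (Suc k))))\<^sup>2"
      by (intro power_strict_mono) auto
    also have "\<dots> = d\<^sup>2 + inverse (real (Suc k))"
      by (rule real_sqrt_pow2) (simp add: add_nonneg_nonneg)
    finally show ?thesis using m by blast
  qed
  then obtain ms where ms: "\<And>k. ms k \<in> M" "\<And>k. (norm (x - ms k))\<^sup>2 < d\<^sup>2 + inverse (real (Suc k))"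
    by metis
  have par: "(norm (a - b))\<^sup>2 \<le> 2 * (norm (x - a))\<^sup>2 + 2 * (norm (x - b))\<^sup>2 - 4 * d\<^sup>2"
    if ab: "a \<in> M" "b \<in> M" for a b
  proof -
    have mid: "scaleR (1/2) (a + b) \<in> M" using ab M csub_add csub_scaleR by metis
    have "2 *\<^sub>R d \<le> 2 *\<^sub>R norm (x - scaleR (1/2) (a + b))" using dle[OF mid] by simp
    also have "\<dots> = norm ((x - a) + (x - b))"
    proof -
      have "(x - a) + (x - b) = 2 *\<^sub>R (x - scaleR (1/2) (a + b))" by (simp add: algebra_simps scaleR_2)
      thus ?thesis by simp
    qed
    finally have "2 * d \<le> norm ((x - a) + (x - b))" by simp
    hence "(2 * d)\<^sup>2 \<le> (norm ((x - a) + (x - b)))\<^sup>2" using d0 by (intro power_mono) auto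
    moreover have "(x - a) - (x - b) = b - a" by simp
    moreover have "norm (b - a) = norm (a - b)" by (rule norm_minus_commute)
    ultimately show ?thesis using parallelogram[of "x - a" "x - b"] by (simp add: power_mult_distrib)
  qed
  have "Cauchy ms"
  proof (rule CauchyI)
    fix e :: real assume e: "e > 0"
    obtain K :: nat where K: "4 / e\<^sup>2 < real K" using reals_Archimedean2 by blast
    have Kp: "real K > 0" using K e by (smt (verit) divide_nonneg_pos zero_less_power)
    have "4 / real K < e\<^sup>2" using K e Kp by (simp add: field_simps)
    show "\<exists>M. \<forall>m\<ge>M. \<forall>n\<ge>M. norm (ms m - ms n) < e"
    proof (intro exI allI impI)
      fix i j assume ij: "i \<ge> K" "j \<ge> K"
      have inv: "inverse (real (Suc l)) \<le> 1 / real K" if "l \<ge> K" for l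
        using that Kp by (simp add: field_simps)
      have "(norm (ms i - ms j))\<^sup>2 \<le> 2 * (norm (x - ms i))\<^sup>2 + 2 * (norm (x - ms j))\<^sup>2 - 4 * d\<^sup>2"
        by (rule par[OF ms(1) ms(1)])
      also have "\<dots> \<le> 2 * inverse (real (Suc i)) + 2 * inverse (real (Suc j))"
        using ms(2)[of i] ms(2)[of j] by simp
      also have "\<dots> \<le> 4 / real K" using inv[OF ij(1)] inv[OF ij(2)] by simp
      also have "\<dots> < e\<^sup>2" by fact
      finally have "(norm (ms i - ms j))\<^sup>2 < e\<^sup>2" .
      thus "norm (ms i - ms j) < e" using e by (simp add: power_less_imp_less_base)
    qed
  qed
  then obtain p where p: "ms \<longlonglongrightarrow> p" using Cauchy_convergent_iff convergent_def by blast
  have pM: "p \<in> M" by (rule closed_sequentially[OF cl ms(1) p])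
  have "(norm (x - p))\<^sup>2 \<le> d\<^sup>2 + 0"
  proof (rule LIMSEQ_le)
    show "(\<lambda>k. (norm (x - ms k))\<^sup>2) \<longlonglongrightarrow> (norm (x - p))\<^sup>2" by (intro tendsto_intros p)
    show "(\<lambda>k. d\<^sup>2 + inverse (real (Suc k))) \<longlonglongrightarrow> d\<^sup>2 + 0"
      by (intro tendsto_intros LIMSEQ_inverse_real_of_nat)
    show "\<exists>N. \<forall>n\<ge>N. (norm (x - ms n))\<^sup>2 \<le> d\<^sup>2 + inverse (real (Suc n))"
      using ms(2) less_imp_le by blast
  qed
  hence pmin: "(norm (x - p))\<^sup>2 \<le> (norm (x - m))\<^sup>2" if "m \<in> M" for m
    using dle[OF that] d0 by (smt (verit) power_mono)
  have "orth M (x - p)"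
    unfolding orth_def
  proof
    fix m assume m: "m \<in> M"
    define e where "e = x - p"
    define c where "c = cinner m e"
    define q where "q = (cmod c)\<^sup>2"
    define s where "s = 1 / ((norm m)\<^sup>2 + 1)"
    have pos: "(norm m)\<^sup>2 + 1 > 0" using zero_le_power2[of "norm m"] by linarith
    have s: "s > 0" using pos by (simp add: s_def)
    have sm: "s * (norm m)\<^sup>2 \<le> 1" using pos by (simp add: s_def field_simps)
    define t where "t = of_real s * c"
    have "p + cscale t m \<in> M" using pM m M csub_add csub_cscale by metis
    hence "(norm e)\<^sup>2 \<le> (norm (e - cscale t m))\<^sup>2" using pmin by (simp add: e_def algebra_simps)
    also have "\<dots> = (norm e)\<^sup>2 + (norm (cscale t m))\<^sup>2 - 2 * Re (cinner e (cscale t m))"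
      by (rule norm_diff_sq)
    also have "norm (cscale t m) = s * cmod c * norm m"
      using s by (simp add: norm_cscale t_def norm_mult)
    also have "cinner e (cscale t m) = of_real s * (c * cnj c)"
      by (simp add: cinner_cscale_right t_def c_def cinner_cnj[of e m] mult.assoc)
    also have "Re (of_real s * (c * cnj c)) = s * q"
      by (simp add: q_def complex_mult_cnj cmod_power2)
    finally have "0 \<le> (s * cmod c * norm m)\<^sup>2 - 2 * (s * q)" by simp
    hence "0 \<le> s * (s * (norm m)\<^sup>2 * q - 2 * q)" by (simp add: q_def power_mult_distrib algebra_simps power2_eq_square)
    hence h: "0 \<le> s * (norm m)\<^sup>2 * q - 2 * q" using s by (simp add: zero_le_mult_iff)
    have q0: "q \<ge> 0" by (simp add: q_def)
    have "s * (norm m)\<^sup>2 * q \<le> 1 * q" using sm q0 by (rule mult_right_mono)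
    hence "q \<le> 0" using h by simp
    hence "q = 0" using q0 by simp
    thus "cinner m (x - p) = 0" by (simp add: q_def c_def e_def)
  qed
  thus ?thesis using pM by blast
qed

definition proj :: "'a::chilbert set \<Rightarrow> 'a \<Rightarrow> 'a" where
  "proj M x = (SOME p. p \<in> M \<and> orth M (x - p))"

lemma proj: "csub M \<Longrightarrow> closed M \<Longrightarrow> proj M x \<in> M \<and> orth M (x - proj M x)"
  unfolding proj_def by (rule someI_ex) (use proj_exists in blast)

lemma proj_unique:
  assumes M: "csub M" "closed M" and p: "p \<in> M" "orth M (x - p)"
  shows "proj M x = p"
proof -
  have q: "proj M x \<in> M" "orth M (x - proj M x)" using proj[OF M] by auto
  have "proj M x - p \<in> M" using csub_diff[OF M(1) q(1) p(1)] .
  moreover have "orth M ((x - p) - (x - proj M x))" using orth_diff[OF p(2) q(2)] .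
  ultimately have "cinner (proj M x - p) (proj M x - p) = 0" by (simp add: orth_def)
  thus ?thesis by (simp add: cinner_self_eq_0)
qed

lemma proj_add: "csub M \<Longrightarrow> closed M \<Longrightarrow> proj M (x + y) = proj M x + proj M y"
  by (rule proj_unique) (auto simp: csub_add proj orth_add[of M "x - proj M x" "y - proj M y", simplified algebra_simps] algebra_simps)

lemma proj_cscale: "csub M \<Longrightarrow> closed M \<Longrightarrow> proj M (cscale a x) = cscale a (proj M x)"
  by (rule proj_unique) (auto simp: csub_cscale proj orth_cscale cscale_diff_right[symmetric])

lemma proj_id: "csub M \<Longrightarrow> closed M \<Longrightarrow> m \<in> M \<Longrightarrow> proj M m = m"
  by (rule proj_unique) (auto simp: orth_zero)

lemma proj_orth_inner: "csub M \<Longrightarrow> closed M \<Longrightarrow> m \<in> M \<Longrightarrow> cinner (x - proj M x) m = 0"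
  using proj by (metis orth_def cinner_zero_sym)

lemma proj_sym: assumes "csub M" "closed M"
  shows "cinner (x - proj M x) y = cinner x (y - proj M y)"
proof -
  have a: "cinner (x - proj M x) (proj M y) = 0" using assms proj proj_orth_inner by blast
  have b: "cinner (proj M x) (y - proj M y) = 0" using proj[OF assms, of x] proj[OF assms, of y] by (simp add: orth_def)
  have "cinner (x - proj M x) y = cinner (x - proj M x) (y - proj M y)"
    using a by (simp add: cinner_diff_right)
  also have "\<dots> = cinner x (y - proj M y)" using b by (simp add: cinner_diff_left)
  finally show ?thesis .
qed

lemma proj_sym2: assumes "csub M" "closed M"
  shows "cinner (proj M x) y = cinner x (proj M y)"
proof -
  have "cinner (proj M x) y = cinner x y - cinner (x - proj M x) y" by (simp add: cinner_diff_left)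
  also have "\<dots> = cinner x y - cinner x (y - proj M y)" using proj_sym[OF assms] by simp
  also have "\<dots> = cinner x (proj M y)" by (simp add: cinner_diff_right)
  finally show ?thesis .
qed

lemma proj_norm: assumes "csub M" "closed M"
  shows "norm (proj M x) \<le> norm x" "norm (x - proj M x) \<le> norm x"
proof -
  have "cinner (proj M x) (x - proj M x) = 0" using proj[OF assms, of x] by (simp add: orth_def)
  hence "(norm (proj M x + (x - proj M x)))\<^sup>2 = (norm (proj M x))\<^sup>2 + (norm (x - proj M x))\<^sup>2"
    by (rule pythag)
  hence eq: "(norm x)\<^sup>2 = (norm (proj M x))\<^sup>2 + (norm (x - proj M x))\<^sup>2" by simp
  have "(norm (proj M x))\<^sup>2 \<le> (norm x)\<^sup>2" using eq zero_le_power2[of "norm (x - proj M x)"] by linarith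
  thus "norm (proj M x) \<le> norm x" by (rule power2_le_imp_le) simp
  have "(norm (x - proj M x))\<^sup>2 \<le> (norm x)\<^sup>2" using eq zero_le_power2[of "norm (proj M x)"] by linarith
  thus "norm (x - proj M x) \<le> norm x" by (rule power2_le_imp_le) simp
qed

lemma riesz:
  fixes f :: "'a::chilbert \<Rightarrow> complex"
  assumes add: "\<And>x y. f (x + y) = f x + f y" and sc: "\<And>a x. f (cscale a x) = a * f x"
    and bd: "\<And>x. cmod (f x) \<le> norm x * K"
  shows "\<exists>z. \<forall>x. f x = cinner z x"
proof (cases "\<forall>x. f x = 0")
  case True thus ?thesis by (intro exI[of _ 0]) simp
next
  case False
  then obtain x0 where x0: "f x0 \<noteq> 0" by blast
  have bl: "bounded_linear f"
  proof
    show "f (x + y) = f x + f y" for x y by (rule add)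
    show "f (scaleR r x) = scaleR r (f x)" for r x
      by (metis sc cscale_of_real scaleR_conv_of_real)
    show "\<exists>K. \<forall>x. norm (f x) \<le> norm x * K" using bd by auto
  qed
  have L: "linear f" using bl bounded_linear.linear by blast
  define N where "N = {x. f x = 0}"
  have csN: "csub N" using linear_0[OF L] add sc by (simp add: csub_def N_def)
  have clN: "closed N"
  proof -
    have "N = f -` {0}" by (auto simp: N_def)
    thus ?thesis using continuous_closed_vimage[OF closed_singleton linear_continuous_at[OF bl]] by simp
  qed
  define w where "w = x0 - proj N x0"
  have ow: "orth N w" using proj[OF csN clN] by (simp add: w_def)
  have fw: "f w = f x0" using proj[OF csN clN] linear_diff[OF L] by (simp add: w_def N_def)
  define nw where "nw = cinner w w"
  have nw: "nw \<noteq> 0" using fw x0 linear_0[OF L] by (auto simp: nw_def cinner_self_eq_0)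
  have key: "cinner w x = (f x / f w) * nw" for x
  proof -
    define v where "v = x - cscale (f x / f w) w"
    have "f v = 0" using fw x0 linear_diff[OF L] by (simp add: v_def sc)
    hence "cinner v w = 0" using ow by (simp add: orth_def N_def)
    hence "cinner w v = 0" by (simp add: cinner_zero_sym)
    thus ?thesis by (simp add: v_def cinner_diff_right cinner_cscale_right nw_def)
  qed
  define z where "z = cscale (cnj (f w / nw)) w"
  have "f x = cinner z x" for x
    using key[of x] nw fw x0 by (simp add: z_def cinner_cscale_left field_simps)
  thus ?thesis by blast
qed

lemma adj_exists:
  assumes "bounded_clinear T"
  shows "\<exists>S. \<forall>x y. cinner (T x) y = cinner x (S y)"
proof -
  obtain K where add: "\<And>x y. T (x + y) = T x + T y"
    and sc: "\<And>a x. T (cscale a x) = cscale a (T x)" and b: "\<And>x. norm (T x) \<le> norm x * K"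
    using assms unfolding bounded_clinear_def by blast
  have "\<exists>z. \<forall>x. cinner (T x) y = cinner x z" for y
  proof -
    have "\<exists>z. \<forall>x. cinner y (T x) = cinner z x"
    proof (rule riesz)
      show "cinner y (T (x1 + x2)) = cinner y (T x1) + cinner y (T x2)" for x1 x2
        by (simp add: add cinner_add_right)
      show "cinner y (T (cscale a x)) = a * cinner y (T x)" for a x
        by (simp add: sc cinner_cscale_right)
      show "cmod (cinner y (T x)) \<le> norm x * (norm y * K)" for x
      proof -
        have "cmod (cinner y (T x)) \<le> norm y * norm (T x)" by (rule cauchy_schwarz)
        also have "\<dots> \<le> norm y * (norm x * K)" using b by (intro mult_left_mono) auto
        finally show ?thesis by (simp add: algebra_simps)
      qed
    qed
    then obtain z where "\<forall>x. cinner y (T x) = cinner z x" by blast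
    hence "\<forall>x. cinner (T x) y = cinner x z" by (metis cinner_cnj)
    thus ?thesis by blast
  qed
  thus ?thesis by metis
qed

lemma adj_eq:
  assumes "\<forall>x y. cinner (T x) y = cinner x (S y)"
  shows "adj T = S"
  unfolding adj_def
proof (rule the_equality)
  show "\<forall>x y. cinner (T x) y = cinner x (S y)" by fact
  fix S' assume "\<forall>x y. cinner (T x) y = cinner x (S' y)"
  thus "S' = S" using assms by (intro ext cinner_ext) metis
qed

lemma adj_char:
  assumes "bounded_clinear T"
  shows "cinner (T x) y = cinner x (adj T y)"
  using adj_exists[OF assms] adj_eq by metis

lemma bcl_parts:
  assumes "bounded_clinear T"
  shows "T (x + y) = T x + T y" "T (cscale a x) = cscale a (T x)" "T (x - y) = T x - T y" "T 0 = 0"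
proof -
  show "T (x + y) = T x + T y" "T (cscale a x) = cscale a (T x)"
    using assms unfolding bounded_clinear_def by blast+
  have L: "linear T" using bcl_linear[OF assms] bounded_linear.linear by blast
  show "T (x - y) = T x - T y" by (rule linear_diff[OF L])
  show "T 0 = 0" by (rule linear_0[OF L])
qed

lemma mp_unique:
  assumes t1: "\<And>x. T (S (T x)) = T x" and t2: "\<And>y. S (T (S y)) = S y"
    and t3: "\<And>x y. cinner (S (T x)) y = cinner x (S (T y))"
    and t4: "\<And>x y. cinner (T (S x)) y = cinner x (T (S y))"
    and u1: "\<And>x. T (S' (T x)) = T x" and u2: "\<And>y. S' (T (S' y)) = S' y"
    and u3: "\<And>x y. cinner (S' (T x)) y = cinner x (S' (T y))"
    and u4: "\<And>x y. cinner (T (S' x)) y = cinner x (T (S' y))"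
  shows "S = S'"
proof -
  have P: "S (T y) = S' (T y)" for y
  proof (rule cinner_ext)
    fix x
    have "cinner x (S (T y)) = cinner (S (T x)) y" by (rule t3[symmetric])
    also have "\<dots> = cinner (S (T (S' (T x)))) y" by (simp add: u1)
    also have "\<dots> = cinner (S' (T x)) (S (T y))" by (rule t3)
    also have "\<dots> = cinner x (S' (T (S (T y))))" by (rule u3)
    also have "\<dots> = cinner x (S' (T y))" by (simp add: t1)
    finally show "cinner x (S (T y)) = cinner x (S' (T y))" .
  qed
  have Q: "T (S y) = T (S' y)" for y
  proof (rule cinner_ext)
    fix x
    have "cinner x (T (S' y)) = cinner x (T (S (T (S' y))))" by (simp add: t1)
    also have "\<dots> = cinner (T (S x)) (T (S' y))" by (rule t4[symmetric])
    also have "\<dots> = cinner (T (S' (T (S x)))) y" by (rule u4[symmetric])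
    also have "\<dots> = cinner (T (S x)) y" by (simp add: u1)
    also have "\<dots> = cinner x (T (S y))" by (rule t4)
    finally show "cinner x (T (S y)) = cinner x (T (S' y))" by simp
  qed
  show ?thesis
  proof
    fix y
    have "S y = S (T (S y))" by (simp add: t2)
    also have "\<dots> = S (T (S' y))" by (simp add: Q)
    also have "\<dots> = S' (T (S' y))" by (rule P)
    also have "\<dots> = S' y" by (rule u2)
    finally show "S y = S' y" .
  qed
qed

lemma comm_mp:
  assumes bT: "bounded_clinear T" and bS: "bounded_clinear S" and bA: "bounded_clinear A"
    and t1: "\<And>x. T (S (T x)) = T x" and t2: "\<And>y. S (T (S y)) = S y"
    and t3: "\<And>x y. cinner (S (T x)) y = cinner x (S (T y))"
    and t4: "\<And>x y. cinner (T (S x)) y = cinner x (T (S y))"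
    and AT: "\<And>x. A (T x) = T (A x)"
    and ATs: "\<And>x. A (Ts x) = Ts (A x)"
    and Ts: "\<And>x y. cinner (T x) y = cinner x (Ts y)"
  shows "A (S y) = S (A y)"
proof -
  obtain Ss where Ss: "\<And>x y. cinner (S x) y = cinner x (Ss y)" using adj_exists[OF bS] by blast
  note T = bcl_parts[OF bT] and S = bcl_parts[OF bS] and A = bcl_parts[OF bA]
  have Q0: "T (S w) = 0" if w: "Ts w = 0" for w
  proof -
    have "cinner (T (S w)) (T (S w)) = cinner w (T (S (T (S w))))" by (rule t4)
    also have "\<dots> = cinner w (T (S w))" by (simp add: t1)
    also have "\<dots> = cnj (cinner (T (S w)) w)" by (rule cinner_cnj)
    also have "\<dots> = 0" by (simp add: Ts w)
    finally show ?thesis by (simp add: cinner_self_eq_0)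
  qed
  have QA: "T (S (A z)) = A (T (S z))" for z
  proof -
    define r where "r = T (S z)"
    define w where "w = z - r"
    have Tsw: "Ts w = 0"
    proof (rule cinner_ext)
      fix x
      have "cinner x (Ts w) = cinner (T x) w" by (rule Ts[symmetric])
      also have "\<dots> = cinner (T x) z - cinner (T x) (T (S z))" by (simp add: w_def r_def cinner_diff_right)
      also have "cinner (T x) (T (S z)) = cinner (T (S (T x))) z" by (rule t4[symmetric])
      finally show "cinner x (Ts w) = cinner x 0" by (simp add: t1)
    qed
    have "A z = A r + A w" by (simp add: w_def A(1)[symmetric])
    hence "T (S (A z)) = T (S (A r)) + T (S (A w))" by (simp add: S(1) T(1))
    also have "T (S (A w)) = 0" using Q0[of "A w"] by (simp add: ATs[symmetric] Tsw A(4))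
    also have "A r = T (A (S z))" by (simp add: r_def AT)
    also have "T (S (T (A (S z)))) = T (A (S z))" by (rule t1)
    finally show ?thesis by (simp add: r_def AT)
  qed
  have PTs: "S (T (Ts v)) = Ts v" for v
  proof (rule cinner_ext)
    fix z
    have "cinner z (S (T (Ts v))) = cinner (S (T z)) (Ts v)" by (rule t3[symmetric])
    also have "\<dots> = cinner (T (S (T z))) v" by (rule Ts[symmetric])
    also have "\<dots> = cinner z (Ts v)" by (simp add: t1 Ts)
    finally show "cinner z (S (T (Ts v))) = cinner z (Ts v)" .
  qed
  have PA: "S (T (A x)) = A (S (T x))" for x
  proof -
    define u where "u = S (T x)"
    define n where "n = x - u"
    have Tn: "T n = 0" by (simp add: n_def u_def T(3) t1)
    have u: "u = Ts (Ss x)"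
    proof (rule cinner_ext)
      fix z
      have "cinner z (S (T x)) = cinner (S (T z)) x" by (rule t3[symmetric])
      also have "\<dots> = cinner (T z) (Ss x)" by (rule Ss)
      also have "\<dots> = cinner z (Ts (Ss x))" by (rule Ts)
      finally show "cinner z u = cinner z (Ts (Ss x))" by (simp add: u_def)
    qed
    have "A x = A u + A n" by (simp add: n_def A(1)[symmetric])
    hence "S (T (A x)) = S (T (A u)) + S (T (A n))" by (simp add: S(1) T(1))
    also have "T (A n) = 0" by (simp add: AT[symmetric] Tn A(4))
    also have "S (T (A u)) = A u" by (simp add: u ATs PTs)
    finally show ?thesis by (simp add: S(4) u_def)
  qed
  have "A (S y) = A (S (T (S y)))" by (simp add: t2)
  also have "\<dots> = S (T (A (S y)))" by (simp add: PA)
  also have "\<dots> = S (A (T (S y)))" by (simp add: AT)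
  also have "\<dots> = S (T (S (A y)))" by (simp add: QA)
  also have "\<dots> = S (A y)" by (rule t2)
  finally show ?thesis .
qed

locale cro =
  fixes T :: "'a::chilbert \<Rightarrow> 'a"
  assumes bcl: "bounded_clinear T" and clr: "closed (range T)"
begin

definition N where "N = {x. T x = 0}"
definition R where "R = range T"

lemma lin: "bounded_linear T" by (rule bcl_linear[OF bcl])

lemmas Tp = bcl_parts[OF bcl]

lemma csN: "csub N" by (simp add: csub_def N_def Tp)

lemma clN: "closed N"
proof -
  have "N = T -` {0}" by (auto simp: N_def)
  thus ?thesis using continuous_closed_vimage[OF closed_singleton linear_continuous_at[OF lin]] by simp
qed

lemma csR: "csub R"
  unfolding csub_def R_def
proof (intro conjI ballI allI)
  show "0 \<in> range T" using Tp(4) by (metis rangeI)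
  show "x + y \<in> range T" if "x \<in> range T" "y \<in> range T" for x y
    using that by (auto simp: Tp(1)[symmetric])
  show "cscale a x \<in> range T" if "x \<in> range T" for a x
    using that by (auto simp: Tp(2)[symmetric])
qed

lemma clR: "closed R" using clr by (simp add: R_def)

lemma S_uniq: "orth N u \<Longrightarrow> orth N v \<Longrightarrow> T u = T v \<Longrightarrow> u = v"
proof -
  assume a: "orth N u" "orth N v" "T u = T v"
  have "u - v \<in> N" using a by (simp add: N_def Tp(3))
  moreover have "orth N (u - v)" using a orth_diff by blast
  ultimately have "cinner (u - v) (u - v) = 0" by (simp add: orth_def)
  thus ?thesis by (simp add: cinner_self_eq_0)
qed

lemma S_ex: "\<exists>u. orth N u \<and> T u = proj R y"
proof -
  obtain x where x: "proj R y = T x" using proj[OF csR clR, of y] by (auto simp: R_def)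
  have "proj N x \<in> N" using proj[OF csN clN] by blast
  hence "T (x - proj N x) = T x" by (simp add: N_def Tp(3))
  moreover have "orth N (x - proj N x)" using proj[OF csN clN] by blast
  ultimately show ?thesis using x by metis
qed

definition Sop where "Sop y = (SOME u. orth N u \<and> T u = proj R y)"

lemma S_char: "orth N (Sop y) \<and> T (Sop y) = proj R y"
  unfolding Sop_def by (rule someI_ex[OF S_ex])

lemma S_eq: "orth N u \<Longrightarrow> T u = proj R y \<Longrightarrow> Sop y = u"
  using S_char S_uniq by metis

lemma S_bcl: "bounded_clinear Sop"
proof -
  obtain C where C: "\<forall>y\<in>range T. \<exists>x. T x = y \<and> norm x \<le> C * norm y"
    using open_mapping_closed_range[OF lin clr] by blast
  have add: "Sop (y1 + y2) = Sop y1 + Sop y2" for y1 y2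
    by (rule S_eq) (simp_all add: S_char orth_add Tp(1) proj_add[OF csR clR])
  have sc: "Sop (cscale a y) = cscale a (Sop y)" for a y
    by (rule S_eq) (simp_all add: S_char orth_cscale Tp(2) proj_cscale[OF csR clR])
  have bd: "norm (Sop y) \<le> norm y * max C 0" for y
  proof -
    have "proj R y \<in> range T" using proj[OF csR clR] by (simp add: R_def)
    then obtain x where x: "T x = proj R y" "norm x \<le> C * norm (proj R y)" using C by blast
    have "T (x - proj N x) = T x" using proj[OF csN clN, of x] by (simp add: N_def Tp(3))
    hence "Sop y = x - proj N x" using x proj[OF csN clN, of x] by (intro S_eq) auto
    hence "norm (Sop y) \<le> norm x" using proj_norm[OF csN clN] by simp
    also have "\<dots> \<le> C * norm (proj R y)" by (rule x(2))
    also have "\<dots> \<le> max C 0 * norm (proj R y)" by (intro mult_right_mono) auto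
    also have "\<dots> \<le> max C 0 * norm y" using proj_norm[OF csR clR] by (intro mult_left_mono) auto
    finally show ?thesis by (simp add: mult.commute)
  qed
  show ?thesis unfolding bounded_clinear_def using add sc bd by blast
qed

lemma TS: "T (Sop y) = proj R y" using S_char by blast

lemma ST: "Sop (T x) = x - proj N x"
proof (rule S_eq)
  show "orth N (x - proj N x)" using proj[OF csN clN] by blast
  have "proj N x \<in> N" using proj[OF csN clN] by blast
  hence "T (x - proj N x) = T x" by (simp add: N_def Tp(3))
  thus "T (x - proj N x) = proj R (T x)" using proj_id[OF csR clR] by (simp add: R_def)
qed

lemma t1: "T (Sop (T x)) = T x" using TS proj_id[OF csR clR] by (simp add: R_def)

lemma t2: "Sop (T (Sop y)) = Sop y"
proof -
  have m: "proj R y \<in> R" using proj[OF csR clR] by blast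
  show ?thesis by (rule S_eq) (simp_all add: S_char TS proj_id[OF csR clR m])
qed

lemma t3: "cinner (Sop (T x)) y = cinner x (Sop (T y))"
  by (simp add: ST proj_sym[OF csN clN])

lemma t4: "cinner (T (Sop x)) y = cinner x (T (Sop y))"
  by (simp add: TS proj_sym2[OF csR clR])

lemma mp: "mp_inv T = Sop"
  unfolding mp_inv_def
proof (rule the_equality)
  show "bounded_clinear Sop \<and> T \<circ> Sop \<circ> T = T \<and> Sop \<circ> T \<circ> Sop = Sop \<and>
        adj (Sop \<circ> T) = Sop \<circ> T \<and> adj (T \<circ> Sop) = T \<circ> Sop"
  proof -
    have "adj (Sop \<circ> T) = Sop \<circ> T" by (rule adj_eq) (simp add: t3)
    moreover have "adj (T \<circ> Sop) = T \<circ> Sop" by (rule adj_eq) (simp add: t4)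
    ultimately show ?thesis by (auto simp: S_bcl fun_eq_iff t1 t2)
  qed
  fix S' assume a: "bounded_clinear S' \<and> T \<circ> S' \<circ> T = T \<and> S' \<circ> T \<circ> S' = S' \<and>
        adj (S' \<circ> T) = S' \<circ> T \<and> adj (T \<circ> S') = T \<circ> S'"
  have u1: "T (S' (T x)) = T x" for x using a by (metis comp_apply)
  have u2: "S' (T (S' y)) = S' y" for y using a by (metis comp_apply)
  have u3: "cinner (S' (T x)) y = cinner x (S' (T y))" for x y
    using adj_char[OF bcl_comp[of S' T], of x y] a bcl by simp
  have u4: "cinner (T (S' x)) y = cinner x (T (S' y))" for x y
    using adj_char[OF bcl_comp[of T S'], of x y] a bcl by simp
  show "S' = Sop"
    by (rule mp_unique[OF u1 u2 u3 u4 t1 t2 t3 t4])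
qed

end

theorem mainTheorem9:
  fixes T :: "'a::chilbert \<Rightarrow> 'a" and n :: nat
  assumes "n \<ge> 1"
    and "bounded_clinear T"
    and "n_normal n T"
    and "closed (range T)"
  shows "n_EP n T"
proof -
  interpret cro T using assms by unfold_locales
  have nn: "(T ^^ n) (adj T x) = adj T ((T ^^ n) x)" for x
    using assms(3) unfolding n_normal_def by (metis comp_apply)
  have "(T ^^ n) (Sop y) = Sop ((T ^^ n) y)" for y
  proof (rule comm_mp[OF bcl S_bcl bcl_funpow[OF bcl] t1 t2 t3 t4])
    show "(T ^^ n) (T x) = T ((T ^^ n) x)" for x by (rule funpow_swap1[symmetric])
    show "(T ^^ n) (adj T x) = adj T ((T ^^ n) x)" for x by (rule nn)
    show "cinner (T x) y = cinner x (adj T y)" for x y by (rule adj_char[OF bcl])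
  qed
  thus ?thesis unfolding n_EP_def using assms(4) by (auto simp: mp fun_eq_iff)
qed

end
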